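(* Work in the semifield $\mathbb{R}_{\max,+}$. Let $\bm{r}_1,\ldots,\bm{r}_m\in\mathbb{R}^{n}$ and $w_1,\ldots,w_m\in\mathbb{R}$, let $\bm{p}=w_1\bm{r}_1\oplus\cdots\oplus w_m\bm{r}_m$ and $\bm{q}^{-}=w_1\bm{r}_1^{-}\oplus\cdots\oplus w_m\bm{r}_m^{-}$, and let $\varphi(\bm{x})=\bm{x}^{-}\bm{p}\oplus\bm{q}^{-}\bm{x}$. Let $A=(a_{ij})\in\mathbb{R}_{\max,+}^{n\times n}$ be an irreducible matrix with $\mathrm{Tr}(A)\le\mathbb{1}$, let $S_1=\{\bm{x}\in\mathbb{R}^n\mid A\bm{x}\le\bm{x}\}$ (i.e. $\max_{j}(a_{ij}+x_j)\le x_i$ for all $i$), and put $$\Delta=\sqrt{(A^{\ast}(\bm{q}^{-}A^{\ast})^{-})^{-}\bm{p}}.$$ Then $\min_{\bm{x}\in S_1}\varphi(\bm{x})=\Delta$, and the minimum is attained at $\bm{x}=\Delta A^{\ast}(\bm{q}^{-}A^{\ast})^{-}$.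
   Context: $\mathbb{R}_{\max,+}=(\mathbb{R}\cup\{-\infty\},-\infty,0,\max,+)$: $x\oplus y=\max(x,y)$, $x\otimes y=x+y$ (sign omitted), zero $\mathbb{0}=-\infty$, identity $\mathbb{1}=0$, $x^{-1}=-x$, $\sqrt{x}=x/2$; order is the usual order on $\mathbb{R}\cup\{-\infty\}$. Matrix and vector operations are the usual ones with $\max$ in place of sum and $+$ in place of product; vector inequalities are componentwise. For a nonzero column (or row) vector $\bm{x}=(x_j)$, the pseudo-inverse $\bm{x}^{-}$ is the row (resp. column) vector with entries $-x_j$ if $x_j\ne-\infty$ and $-\infty$ otherwise; $\bm{q}$ is the column vector with $\bm{q}^{-}$ as its pseudo-inverse. $I$ is the identity matrix (0 on the diagonal, $-\infty$ elsewhere), $A^0=I$, $A^{k}=A^{k-1}A$, and $A^{\ast}=I\oplus A\oplus\cdots\oplus A^{n-1}$. A square matrix is irreducible if it cannot be brought to block-triangular form by simultaneous permutation of rows and columns. $\mathrm{tr}A=\bigoplus_i a_{ii}$ and $\mathrm{Tr}(A)=\bigoplus_{k=1}^{n}\mathrm{tr}A^{k}$. *)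

theory Defs
  imports "HOL-Library.Extended_Real"
begin

text \<open>Max-plus algebra over ereal (only the values in real \<union> {-\<infinity>} are meant).
  Matrices are indexed by a finite type 'n (so n = card (UNIV :: 'n set) \<ge> 1).\<close>

definition mp_mult :: "('n::finite \<Rightarrow> 'n \<Rightarrow> ereal) \<Rightarrow> ('n \<Rightarrow> 'n \<Rightarrow> ereal) \<Rightarrow> 'n \<Rightarrow> 'n \<Rightarrow> ereal" where
  "mp_mult A B = (\<lambda>i j. Max (range (\<lambda>k. A i k + B k j)))"

definition mp_id :: "'n::finite \<Rightarrow> 'n \<Rightarrow> ereal" where
  "mp_id = (\<lambda>i j. if i = j then 0 else -\<infinity>)"

fun mp_pow :: "('n::finite \<Rightarrow> 'n \<Rightarrow> ereal) \<Rightarrow> nat \<Rightarrow> 'n \<Rightarrow> 'n \<Rightarrow> ereal" where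
  "mp_pow A 0 = mp_id"
| "mp_pow A (Suc k) = mp_mult (mp_pow A k) A"

definition mp_star :: "('n::finite \<Rightarrow> 'n \<Rightarrow> ereal) \<Rightarrow> 'n \<Rightarrow> 'n \<Rightarrow> ereal" where
  "mp_star A = (\<lambda>i j. Max ((\<lambda>k. mp_pow A k i j) ` {0..<card (UNIV :: 'n set)}))"

definition mp_tr :: "('n::finite \<Rightarrow> 'n \<Rightarrow> ereal) \<Rightarrow> ereal" where
  "mp_tr A = Max (range (\<lambda>i. A i i))"

definition mp_Tr :: "('n::finite \<Rightarrow> 'n \<Rightarrow> ereal) \<Rightarrow> ereal" where
  "mp_Tr A = Max ((\<lambda>k. mp_tr (mp_pow A k)) ` {1..card (UNIV :: 'n set)})"

definition mp_mat_vec :: "('n::finite \<Rightarrow> 'n \<Rightarrow> ereal) \<Rightarrow> ('n \<Rightarrow> ereal) \<Rightarrow> 'n \<Rightarrow> ereal" where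
  "mp_mat_vec A x = (\<lambda>i. Max (range (\<lambda>j. A i j + x j)))"

definition mp_vec_mat :: "('n::finite \<Rightarrow> ereal) \<Rightarrow> ('n \<Rightarrow> 'n \<Rightarrow> ereal) \<Rightarrow> 'n \<Rightarrow> ereal" where
  "mp_vec_mat u A = (\<lambda>j. Max (range (\<lambda>i. u i + A i j)))"

definition mp_inner :: "('n::finite \<Rightarrow> ereal) \<Rightarrow> ('n \<Rightarrow> ereal) \<Rightarrow> ereal" where
  "mp_inner u x = Max (range (\<lambda>i. u i + x i))"

text \<open>Pseudo-inverse (transposition is implicit: vectors are plain functions).\<close>
definition mp_pinv :: "('n \<Rightarrow> ereal) \<Rightarrow> 'n \<Rightarrow> ereal" where
  "mp_pinv x = (\<lambda>i. if x i = -\<infinity> then -\<infinity> else - x i)"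

text \<open>Irreducibility: A cannot be brought to block-triangular form by a simultaneous
  permutation of rows and columns, i.e. there is no nonempty proper index set I such that
  all entries a_ij with i \<in> I, j \<notin> I are the zero -\<infinity>.\<close>
definition mp_irreducible :: "('n::finite \<Rightarrow> 'n \<Rightarrow> ereal) \<Rightarrow> bool" where
  "mp_irreducible A \<longleftrightarrow>
     \<not> (\<exists>I. I \<noteq> {} \<and> I \<noteq> UNIV \<and> (\<forall>i\<in>I. \<forall>j. j \<notin> I \<longrightarrow> A i j = -\<infinity>))"

end

theory Submission imports Defs begin

definition wt :: "('n \<Rightarrow> 'n \<Rightarrow> ereal) \<Rightarrow> (nat \<Rightarrow> 'n) \<Rightarrow> nat \<Rightarrow> ereal" where
  "wt A f k = (\<Sum>t<k. A (f t) (f (Suc t)))"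

lemma Max_range_ge: "f i \<le> Max (range (f::'n::finite \<Rightarrow> 'a::linorder))"
  by (rule Max_ge) auto

lemma Max_range_in: "\<exists>i. Max (range (f::'n::finite \<Rightarrow> 'a::linorder)) = f i"
proof -
  have "Max (range f) \<in> range f" by (rule Max_in) auto
  then show ?thesis by blast
qed

lemma walk_le_pow: "f 0 = i \<Longrightarrow> f k = j \<Longrightarrow> wt A f k \<le> mp_pow A k i j"
proof (induction k arbitrary: j)
  case 0 then show ?case by (simp add: wt_def mp_id_def)
next
  case (Suc k)
  have "wt A f (Suc k) = wt A f k + A (f k) j" using Suc.prems by (simp add: wt_def)
  also have "\<dots> \<le> mp_pow A k i (f k) + A (f k) j"
    using Suc.IH[of "f k"] Suc.prems by (intro add_mono) auto
  also have "\<dots> \<le> mp_pow A (Suc k) i j"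
    by (simp add: mp_mult_def)
  finally show ?case .
qed

lemma pow_walk:
  assumes fin: "\<forall>i j. A i j \<noteq> \<infinity>"
  shows "mp_pow A k i j \<noteq> -\<infinity> \<Longrightarrow> \<exists>f. f 0 = i \<and> f k = j \<and> wt A f k = mp_pow A k i j"
proof (induction k arbitrary: j)
  case 0
  then have "i = j" by (simp add: mp_id_def split: if_splits)
  then show ?case by (intro exI[of _ "\<lambda>_. i"]) (simp add: wt_def mp_id_def)
next
  case (Suc k)
  obtain l where l: "mp_pow A (Suc k) i j = mp_pow A k i l + A l j"
    using Max_range_in[of "\<lambda>l. mp_pow A k i l + A l j"] by (auto simp: mp_mult_def)
  have "mp_pow A k i l \<noteq> -\<infinity>" using Suc.prems l fin by auto
  then obtain f where f: "f 0 = i" "f k = l" "wt A f k = mp_pow A k i l" using Suc.IH by blast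
  define g where "g = f(Suc k := j)"
  have "wt A g k = wt A f k" unfolding wt_def g_def by (intro sum.cong) auto
  then have "wt A g (Suc k) = wt A f k + A l j" by (simp add: wt_def g_def f)
  moreover have "g 0 = i" "g (Suc k) = j" using f by (auto simp: g_def)
  ultimately show ?case using f l by (intro exI[of _ g]) (simp del: fun_upd_apply)
qed

lemma pow_not_inf:
  assumes fin: "\<forall>i j. A i j \<noteq> \<infinity>"
  shows "mp_pow A k i j \<noteq> \<infinity>"
proof (induction k arbitrary: j)
  case 0 then show ?case by (simp add: mp_id_def)
next
  case (Suc k)
  obtain l where l: "mp_pow A (Suc k) i j = mp_pow A k i l + A l j"
    using Max_range_in[of "\<lambda>l. mp_pow A k i l + A l j"] by (auto simp: mp_mult_def)
  then show ?case using Suc.IH[of l] fin by simp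
qed

lemma pow_le_star: fixes A :: "'n::finite \<Rightarrow> 'n \<Rightarrow> ereal" shows "k < card (UNIV :: 'n set) \<Longrightarrow> mp_pow A k i j \<le> mp_star A i j"
  unfolding mp_star_def by (rule Max_ge) auto

lemma star_is_pow: fixes A :: "'n::finite \<Rightarrow> 'n \<Rightarrow> ereal" shows "\<exists>k<card (UNIV :: 'n set). mp_star A i j = mp_pow A k i j"
proof -
  have "mp_star A i j \<in> (\<lambda>k. mp_pow A k i j) ` {0..<card (UNIV :: 'n set)}"
    unfolding mp_star_def by (rule Max_in) auto
  then show ?thesis by auto
qed

lemma walk_le_star:
  fixes A :: "'n::finite \<Rightarrow> 'n \<Rightarrow> ereal"
  assumes Tr: "mp_Tr A \<le> 0"
  shows "f 0 = i \<Longrightarrow> f m = j \<Longrightarrow> wt A f m \<le> mp_star A i j"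
proof (induction m arbitrary: f rule: less_induct)
  case (less m)
  show ?case
  proof (cases "m < card (UNIV :: 'n set)")
    case True
    then show ?thesis using walk_le_pow[OF less.prems] pow_le_star[of m] order_trans by blast
  next
    case False
    have "\<not> inj_on f {0..card (UNIV :: 'n set)}"
    proof
      assume "inj_on f {0..card (UNIV :: 'n set)}"
      then have "card (f ` {0..card (UNIV :: 'n set)}) = Suc (card (UNIV :: 'n set))" by (simp add: card_image)
      moreover have "card (f ` {0..card (UNIV :: 'n set)}) \<le> card (UNIV :: 'n set)" by (rule card_mono) auto
      ultimately show False by simp
    qed
    then obtain a b where ab: "a < b" "b \<le> card (UNIV :: 'n set)" "f a = f b"
      unfolding inj_on_def by (metis atLeastAtMost_iff linorder_neqE_nat)
    define c where "c = b - a"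
    have c: "1 \<le> c" "c \<le> card (UNIV :: 'n set)" "b = a + c" using ab by (auto simp: c_def)
    define h where "h t = f (a + t)" for t
    have "wt A h c \<le> mp_pow A c (f a) (f a)"
    proof (rule walk_le_pow)
      have "f (a + c) = f a" using ab(3) c(3) by simp
      then show "h c = f a" by (simp add: h_def)
    qed (simp add: h_def)
    also have "\<dots> \<le> mp_tr (mp_pow A c)" unfolding mp_tr_def by (rule Max_range_ge)
    also have "\<dots> \<le> mp_Tr A" unfolding mp_Tr_def by (rule Max_ge) (use c in auto)
    finally have C: "wt A h c \<le> 0" using Tr by simp
    define g where "g t = (if t < a then f t else f (t + c))" for t
    define E where "E t = A (f t) (f (Suc t))" for t
    have split: "wt A f m = sum E {0..<a} + sum E {a..<b} + sum E {b..<m}"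
      unfolding wt_def E_def using ab c False
      by (simp add: atLeast0LessThan[symmetric] sum.atLeastLessThan_concat)
    have Cm: "sum E {a..<b} = wt A h c"
      unfolding wt_def E_def h_def c using sum.shift_bounds_nat_ivl[of E 0 a c]
      by (simp add: E_def add.commute atLeast0LessThan)
    have gsplit: "wt A g (m - c) = sum E {0..<a} + sum E {b..<m}"
    proof -
      have 1: "wt A g (m - c) = (\<Sum>t\<in>{0..<a}. A (g t) (g (Suc t))) + (\<Sum>t\<in>{a..<m-c}. A (g t) (g (Suc t)))"
        unfolding wt_def using ab c False
        by (simp add: atLeast0LessThan[symmetric] sum.atLeastLessThan_concat)
      have 2: "(\<Sum>t\<in>{0..<a}. A (g t) (g (Suc t))) = sum E {0..<a}"
      proof (intro sum.cong refl)
        fix t assume t: "t \<in> {0..<a}"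
        have "g (Suc t) = f (Suc t)"
        proof (cases "Suc t < a")
          case False
          then have "Suc t = a" using t by auto
          then show ?thesis using ab c by (simp add: g_def)
        qed (simp add: g_def)
        then show "A (g t) (g (Suc t)) = E t" using t by (simp add: g_def E_def)
      qed
      have "(\<Sum>t\<in>{a..<m-c}. A (g t) (g (Suc t))) = (\<Sum>t\<in>{a..<m-c}. E (t + c))"
        by (intro sum.cong) (auto simp: g_def E_def)
      also have "\<dots> = sum E {b..<m}"
        using sum.shift_bounds_nat_ivl[of E a c "m - c"] c ab False by simp
      finally show ?thesis using 1 2 by simp
    qed
    have "wt A f m \<le> sum E {0..<a} + 0 + sum E {b..<m}"
      unfolding split Cm by (intro add_mono C order_refl)
    also have "\<dots> = wt A g (m - c)" using gsplit by simp
    also have "\<dots> \<le> mp_star A i j"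
    proof (rule less.IH)
      show "m - c < m" using c False by auto
      show "g 0 = i" using less.prems ab c by (auto simp: g_def)
      show "g (m - c) = j" using less.prems ab c False
        by (auto simp: g_def)
    qed
    finally show ?thesis .
  qed
qed

lemma S1_pow:
  fixes A :: "'n::finite \<Rightarrow> 'n \<Rightarrow> ereal"
  assumes h: "\<forall>i. mp_mat_vec A (\<lambda>j. ereal (x j)) i \<le> ereal (x i)"
  shows "mp_pow A k l i + ereal (x i) \<le> ereal (x l)"
proof (induction k arbitrary: i)
  case 0 then show ?case by (simp add: mp_id_def)
next
  case (Suc k)
  obtain m where m: "mp_pow A (Suc k) l i = mp_pow A k l m + A m i"
    using Max_range_in[of "\<lambda>m. mp_pow A k l m + A m i"] by (auto simp: mp_mult_def)
  have "A m i + ereal (x i) \<le> mp_mat_vec A (\<lambda>j. ereal (x j)) m"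
    unfolding mp_mat_vec_def by (rule Max_range_ge[where f="\<lambda>j. A m j + ereal (x j)"])
  also have "\<dots> \<le> ereal (x m)" using h by blast
  finally have 1: "A m i + ereal (x i) \<le> ereal (x m)" .
  have "mp_pow A (Suc k) l i + ereal (x i) = mp_pow A k l m + (A m i + ereal (x i))"
    by (subst m) (simp add: add.assoc)
  also have "\<dots> \<le> mp_pow A k l m + ereal (x m)" by (intro add_mono 1 order_refl)
  also have "\<dots> \<le> ereal (x l)" by (rule Suc.IH)
  finally show ?case .
qed

lemma S1_star:
  fixes A :: "'n::finite \<Rightarrow> 'n \<Rightarrow> ereal"
  assumes h: "\<forall>i. mp_mat_vec A (\<lambda>j. ereal (x j)) i \<le> ereal (x i)"
  shows "mp_star A l i + ereal (x i) \<le> ereal (x l)"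
  using star_is_pow[of A l i] S1_pow[OF h] by metis

lemma A_star:
  fixes A :: "'n::finite \<Rightarrow> 'n \<Rightarrow> ereal"
  assumes fin: "\<forall>i j. A i j \<noteq> \<infinity>" and Tr: "mp_Tr A \<le> 0"
  shows "A i j + mp_star A j l \<le> mp_star A i l"
proof -
  obtain k where k: "mp_star A j l = mp_pow A k j l" using star_is_pow by blast
  show ?thesis
  proof (cases "mp_pow A k j l = -\<infinity>")
    case True then show ?thesis using k fin[rule_format, of i j] by (cases "A i j") auto
  next
    case False
    then obtain f where f: "f 0 = j" "f k = l" "wt A f k = mp_pow A k j l"
      using pow_walk[OF fin] by blast
    define g where "g t = (if t = 0 then i else f (t - 1))" for t
    have e: "wt A g (Suc k) = A i j + wt A f k"
      unfolding wt_def sum.lessThan_Suc_shift by (simp add: g_def f)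
    have "wt A g (Suc k) \<le> mp_star A i l"
      by (rule walk_le_star[OF Tr]) (auto simp: g_def f)
    then show ?thesis using f k e by simp
  qed
qed

theorem theorem7:
  fixes r :: "'k::finite \<Rightarrow> 'n::finite \<Rightarrow> real"
    and w :: "'k \<Rightarrow> real"
    and A :: "'n \<Rightarrow> 'n \<Rightarrow> ereal"
    and p qm :: "'n \<Rightarrow> ereal"
    and S1 :: "('n \<Rightarrow> real) set"
    and \<phi> :: "('n \<Rightarrow> real) \<Rightarrow> ereal"
    and \<Delta> :: ereal
  assumes p_def: "p = (\<lambda>i. Max (range (\<lambda>k. ereal (w k) + ereal (r k i))))"
    and qm_def: "qm = (\<lambda>i. Max (range (\<lambda>k. ereal (w k) + mp_pinv (\<lambda>j. ereal (r k j)) i)))"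
    and \<phi>_def: "\<phi> = (\<lambda>x. max (mp_inner (mp_pinv (\<lambda>i. ereal (x i))) p) (mp_inner qm (\<lambda>i. ereal (x i))))"
    and A_fin: "\<forall>i j. A i j \<noteq> \<infinity>"
    and irr: "mp_irreducible A"
    and Tr: "mp_Tr A \<le> 0"
    and S1_def: "S1 = {x. \<forall>i. mp_mat_vec A (\<lambda>j. ereal (x j)) i \<le> ereal (x i)}"
    and \<Delta>_def: "\<Delta> = mp_inner (mp_pinv (mp_mat_vec (mp_star A) (mp_pinv (mp_vec_mat qm (mp_star A))))) p / 2"
  shows "(\<forall>x\<in>S1. \<Delta> \<le> \<phi> x)
       \<and> (\<exists>x0\<in>S1. (\<forall>i. ereal (x0 i) = \<Delta> + mp_mat_vec (mp_star A) (mp_pinv (mp_vec_mat qm (mp_star A))) i)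
                  \<and> \<phi> x0 = \<Delta>)"
proof -
  define S where "S = mp_star A"
  have Sfin: "S i j \<noteq> \<infinity>" for i j
    using star_is_pow[of A i j] pow_not_inf[OF A_fin] unfolding S_def by metis
  have Sdiag: "0 \<le> S i i" for i
    using pow_le_star[of 0 A i i] by (simp add: S_def mp_id_def finite_UNIV_card_ge_0)
  define pr where "pr i = real_of_ereal (p i)" for i
  have pr: "p i = ereal (pr i)" for i
  proof -
    obtain k where "p i = ereal (w k) + ereal (r k i)"
      using Max_range_in[of "\<lambda>k. ereal (w k) + ereal (r k i)"] p_def by auto
    then show ?thesis by (simp add: pr_def)
  qed
  define qr where "qr i = real_of_ereal (qm i)" for i
  have qr: "qm i = ereal (qr i)" for i
  proof -
    obtain k where "qm i = ereal (w k) + mp_pinv (\<lambda>j. ereal (r k j)) i"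
      using Max_range_in[of "\<lambda>k. ereal (w k) + mp_pinv (\<lambda>j. ereal (r k j)) i"] qm_def by auto
    then show ?thesis by (simp add: qr_def mp_pinv_def)
  qed
  define U where "U = mp_vec_mat qm S"
  have U_ge: "qm i + S i j \<le> U j" for i j
    unfolding U_def mp_vec_mat_def by (rule Max_range_ge[where f="\<lambda>i. qm i + S i j"])
  have U_in: "\<exists>i. U j = qm i + S i j" for j
    unfolding U_def mp_vec_mat_def by (rule Max_range_in)
  define ur where "ur j = real_of_ereal (U j)" for j
  have ur: "U j = ereal (ur j)" for j
  proof -
    have "ereal (qr j) \<le> U j" using U_ge[of j j] Sdiag[of j] qr[of j]
      by (metis add_left_mono add.right_neutral order_trans)
    moreover have "U j \<noteq> \<infinity>"
    proof -
      obtain i where "U j = qm i + S i j" using U_in by blast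
      then show ?thesis using Sfin[of i j] qr[of i] by (cases "S i j") auto
    qed
    ultimately show ?thesis unfolding ur_def by (cases "U j") auto
  qed
  have pU: "mp_pinv U j = ereal (- ur j)" for j by (simp add: mp_pinv_def ur)
  define V where "V = mp_mat_vec S (mp_pinv U)"
  have V_ge: "S i l + ereal (- ur l) \<le> V i" for i l
    unfolding V_def mp_mat_vec_def pU by (rule Max_range_ge[where f="\<lambda>l. S i l + ereal (- ur l)"])
  have V_in: "\<exists>l. V i = S i l + ereal (- ur l)" for i
    unfolding V_def mp_mat_vec_def pU by (rule Max_range_in)
  define vr where "vr i = real_of_ereal (V i)" for i
  have vr: "V i = ereal (vr i)" for i
  proof -
    have "ereal (- ur i) \<le> V i" using V_ge[of i i] Sdiag[of i]
      by (metis add_right_mono add.left_neutral order_trans)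
    moreover have "V i \<noteq> \<infinity>"
    proof -
      obtain l where "V i = S i l + ereal (- ur l)" using V_in by blast
      then show ?thesis using Sfin[of i l] by (cases "S i l") auto
    qed
    ultimately show ?thesis unfolding vr_def by (cases "V i") auto
  qed
  have pV: "mp_pinv V i = ereal (- vr i)" for i by (simp add: mp_pinv_def vr)
  define D where "D = mp_inner (mp_pinv V) p"
  have D_eq: "D = Max (range (\<lambda>i. ereal (pr i - vr i)))"
    unfolding D_def mp_inner_def pV pr by simp
  obtain i0 where i0: "D = ereal (pr i0 - vr i0)"
    using Max_range_in[of "\<lambda>i. ereal (pr i - vr i)"] D_eq by auto
  define dr where "dr = pr i0 - vr i0"
  have dr_ge: "pr i - vr i \<le> dr" for i
  proof -
    have "ereal (pr i - vr i) \<le> D" unfolding D_eq by (rule Max_range_ge)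
    then show ?thesis using i0 by (simp add: dr_def)
  qed
  have Delta: "\<Delta> = ereal (dr / 2)"
    unfolding \<Delta>_def S_def[symmetric] U_def[symmetric] V_def[symmetric] D_def[symmetric] i0 dr_def
    by simp
  have R1: "qr i + vr i \<le> 0" for i
  proof -
    obtain l where l: "V i = S i l + ereal (- ur l)" using V_in by blast
    show ?thesis
    proof (cases "S i l")
      case (real s)
      have "qm i + S i l \<le> U l" by (rule U_ge)
      then show ?thesis using l real vr[of i] qr[of i] ur[of l] by simp
    qed (use l vr[of i] Sfin in auto)
  qed
  obtain i1 where R2: "qr i1 + vr i1 = 0"
  proof -
    fix l :: 'n
    obtain i where i: "U l = qm i + S i l" using U_in by blast
    show ?thesis
    proof (cases "S i l")
      case (real s)
      have "S i l + ereal (- ur l) \<le> V i" by (rule V_ge)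
      then have "0 \<le> qr i + vr i" using i real vr[of i] qr[of i] ur[of l] by simp
      then show ?thesis using R1[of i] that by force
    qed (use i ur[of l] qr Sfin in auto)
  qed
  have phi_eq: "\<phi> x = max (Max (range (\<lambda>i. ereal (pr i - x i)))) (Max (range (\<lambda>i. ereal (qr i + x i))))" for x
    unfolding \<phi>_def mp_inner_def mp_pinv_def by (simp add: pr qr)
  have Max_eq: "Max (range f) = c" if "\<forall>i. f i \<le> c" "f i = c" for f :: "'n \<Rightarrow> ereal" and c i
    by (rule Max_eqI) (use that in auto)
  have part1: "\<Delta> \<le> \<phi> x" if "x \<in> S1" for x
  proof -
    have hx: "\<forall>i. mp_mat_vec A (\<lambda>j. ereal (x j)) i \<le> ereal (x i)" using that S1_def by simp
    have Sx: "S l i + ereal (x i) \<le> ereal (x l)" for l i using S1_star[OF hx] S_def by simp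
    obtain j0 where j0: "Max (range (\<lambda>i. ereal (qr i + x i))) = ereal (qr j0 + x j0)"
      using Max_range_in by blast
    define sr where "sr = qr j0 + x j0"
    have sr_ge: "qr j + x j \<le> sr" for j
    proof -
      have "ereal (qr j + x j) \<le> Max (range (\<lambda>i. ereal (qr i + x i)))" by (rule Max_range_ge)
      then show ?thesis using j0 sr_def by simp
    qed
    have xb: "x i \<le> sr + vr i" for i
    proof -
      obtain l where l: "U i = qm l + S l i" using U_in by blast
      show ?thesis
      proof (cases "S l i")
        case (real s)
        have 1: "s + x i \<le> x l" using Sx[of l i] real by simp
        have 2: "ur i = qr l + s" using l ur[of i] qr[of l] real by simp
        have "S i i + ereal (- ur i) \<le> V i" by (rule V_ge)
        then have 3: "- ur i \<le> vr i" using Sdiag[of i] vr[of i] Sfin[of i i] by (cases "S i i") auto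
        show ?thesis using 1 2 3 sr_ge[of l] by linarith
      qed (use l ur[of i] qr Sfin in auto)
    qed
    have M1: "ereal (pr i0 - x i0) \<le> Max (range (\<lambda>i. ereal (pr i - x i)))" by (rule Max_range_ge)
    have "dr - sr \<le> pr i0 - x i0" using xb[of i0] dr_def by simp
    then have M1': "ereal (dr - sr) \<le> Max (range (\<lambda>i. ereal (pr i - x i)))"
      using M1 order_trans ereal_less_eq(3) by blast
    show ?thesis
    proof (cases "dr / 2 \<le> sr")
      case True
      then have "ereal (dr/2) \<le> ereal sr" by simp
      then show ?thesis unfolding Delta phi_eq j0 sr_def[symmetric] by (meson max.coboundedI2 order_trans)
    next
      case False
      then have "ereal (dr/2) \<le> ereal (dr - sr)" by simp
      then show ?thesis unfolding Delta phi_eq using M1' by (meson max.coboundedI1 order_trans)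
    qed
  qed
  define x0 where "x0 i = dr / 2 + vr i" for i
  have Av: "A i j + ereal (vr j) \<le> ereal (vr i)" for i j
  proof -
    obtain l where l: "V j = S j l + ereal (- ur l)" using V_in by blast
    show ?thesis
    proof (cases "S j l")
      case (real s)
      have vj: "vr j = s - ur l" using l vr[of j] real by simp
      have AS: "A i j + S j l \<le> S i l" using A_star[OF A_fin Tr] S_def by simp
      have VS: "S i l + ereal (- ur l) \<le> ereal (vr i)" using V_ge[of i l] vr[of i] by simp
      show ?thesis
      proof (cases "A i j")
        case (real a)
        show ?thesis
        proof (cases "S i l")
          case (real t)
          then show ?thesis using AS VS vj \<open>A i j = ereal a\<close> \<open>S j l = ereal s\<close> by simp
        qed (use AS \<open>A i j = ereal a\<close> \<open>S j l = ereal s\<close> Sfin in auto)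
      qed (use A_fin in auto)
    qed (use l vr[of j] Sfin in auto)
  qed
  have x0S1: "x0 \<in> S1"
    unfolding S1_def
  proof (safe)
    fix i
    obtain j where j: "mp_mat_vec A (\<lambda>j. ereal (x0 j)) i = A i j + ereal (x0 j)"
      unfolding mp_mat_vec_def using Max_range_in by blast
    have "A i j + ereal (x0 j) \<le> ereal (x0 i)"
      using Av[of i j] A_fin unfolding x0_def by (cases "A i j") auto
    then show "mp_mat_vec A (\<lambda>j. ereal (x0 j)) i \<le> ereal (x0 i)" using j by simp
  qed
  have phi0: "\<phi> x0 = \<Delta>"
  proof -
    have a: "Max (range (\<lambda>i. ereal (pr i - x0 i))) = ereal (dr / 2)"
    proof (rule Max_eq)
      show "\<forall>i. ereal (pr i - x0 i) \<le> ereal (dr / 2)"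
      proof
        fix i show "ereal (pr i - x0 i) \<le> ereal (dr / 2)" using dr_ge[of i] by (simp add: x0_def)
      qed
      show "ereal (pr i0 - x0 i0) = ereal (dr / 2)" by (simp add: x0_def dr_def field_simps)
    qed
    have b: "Max (range (\<lambda>i. ereal (qr i + x0 i))) = ereal (dr / 2)"
    proof (rule Max_eq)
      show "\<forall>i. ereal (qr i + x0 i) \<le> ereal (dr / 2)"
      proof
        fix i show "ereal (qr i + x0 i) \<le> ereal (dr / 2)" using R1[of i] by (simp add: x0_def)
      qed
      show "ereal (qr i1 + x0 i1) = ereal (dr / 2)" using R2 by (simp add: x0_def)
    qed
    show ?thesis unfolding phi_eq a b Delta by simp
  qed
  have x0eq: "ereal (x0 i) = \<Delta> + V i" for i
    by (simp add: x0_def Delta vr)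
  show ?thesis
    unfolding S_def[symmetric] U_def[symmetric] V_def[symmetric]
    using part1 x0S1 phi0 x0eq by blast
qed

end
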